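(* Let $s\in(\tfrac12,1)$, $\alpha\in(0,1)$, $c>0$, let $e\in C^{\alpha}(\mathbb{R})$ be $2\pi$-periodic with $\bar e=\frac1{2\pi}\int_0^{2\pi}e>0$, and let $g\in C^{\alpha}((0,+\infty))$ satisfy (G1) $\limsup_{t\to+\infty}[g(t)+\bar e]<0$, and (G2) $\lim_{t\to0^+}g(t)=+\infty$ and $g$ is monotone near zero. Then there exist constants $R_1>R_0>0$ such that for every $\lambda\in(0,1)$ and every positive $2\pi$-periodic classical solution $u$ of $$(\Delta)^s u(t)+c\,u'(t)-\lambda g(u(t))=\lambda e(t),\qquad t\in\mathbb{R},$$ there exist $t_0,t_1\in[0,2\pi]$ with $u(t_0)>R_0$ and $u(t_1)<R_1$.
   Context: $(-\Delta)^s u(x)=C_{1,s}\,\mathrm{P.V.}\int_{\mathbb{R}}\frac{u(x)-u(z)}{|x-z|^{1+2s}}\,dz$ with $C_{1,s}=\left(\int_{\mathbb{R}}\frac{1-\cos\xi}{|\xi|^{1+2s}}d\xi\right)^{-1}$, and $(\Delta)^s u:=-(-\Delta)^s u$. A classical solution is a $C^{2s+\alpha}$ function satisfying the equation pointwise. *)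

theory Defs
  imports "HOL-Analysis.Analysis" "HOL-Library.Liminf_Limsup"
begin

definition hoelder_on :: "real \<Rightarrow> real set \<Rightarrow> (real \<Rightarrow> real) \<Rightarrow> bool" where
  "hoelder_on \<beta> S f \<longleftrightarrow> (\<forall>K. compact K \<and> K \<subseteq> S \<longrightarrow>
      (\<exists>C. \<forall>x\<in>K. \<forall>y\<in>K. \<bar>f x - f y\<bar> \<le> C * \<bar>x - y\<bar> powr \<beta>))"

text \<open>The space C^r(R), r > 0: with k = ceiling r - 1 and beta = r - k in (0,1],
  f is k times differentiable and its k-th derivative is locally beta-Hoelder.\<close>
definition C_hoelder :: "real \<Rightarrow> (real \<Rightarrow> real) \<Rightarrow> bool" where
  "C_hoelder r f \<longleftrightarrow>
     (let k = nat (\<lceil>r\<rceil> - 1) in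
       (\<forall>j<k. \<forall>x. ((deriv ^^ j) f has_real_derivative (deriv ^^ Suc j) f x) (at x)) \<and>
       hoelder_on (r - real k) UNIV ((deriv ^^ k) f))"

definition C1s :: "real \<Rightarrow> real" where
  "C1s s = 1 / integral UNIV (\<lambda>\<xi>. (1 - cos \<xi>) / \<bar>\<xi>\<bar> powr (1 + 2 * s))"

definition pv_trunc :: "real \<Rightarrow> (real \<Rightarrow> real) \<Rightarrow> real \<Rightarrow> real \<Rightarrow> real" where
  "pv_trunc s u x \<epsilon> = integral {z. \<epsilon> \<le> \<bar>x - z\<bar>} (\<lambda>z. (u x - u z) / \<bar>x - z\<bar> powr (1 + 2 * s))"

definition pv_exists :: "real \<Rightarrow> (real \<Rightarrow> real) \<Rightarrow> real \<Rightarrow> bool" where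
  "pv_exists s u x \<longleftrightarrow> (\<exists>L. (pv_trunc s u x \<longlongrightarrow> L) (at_right 0))"

text \<open>(-Delta)^s u (x).\<close>
definition frac_lap :: "real \<Rightarrow> (real \<Rightarrow> real) \<Rightarrow> real \<Rightarrow> real" where
  "frac_lap s u x = C1s s * Lim (at_right 0) (pv_trunc s u x)"

definition classical_solution ::
  "real \<Rightarrow> real \<Rightarrow> real \<Rightarrow> real \<Rightarrow> (real \<Rightarrow> real) \<Rightarrow> (real \<Rightarrow> real) \<Rightarrow> (real \<Rightarrow> real) \<Rightarrow> bool" where
  "classical_solution s \<alpha> c lam g e u \<longleftrightarrow>
     C_hoelder (2 * s + \<alpha>) u \<and>
     (\<forall>t. pv_exists s u t \<and>
          - frac_lap s u t + c * deriv u t - lam * g (u t) = lam * e t)"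

end

theory Submission
  imports Defs
begin

lemma per_nat: assumes "\<forall>t. u (t + 2*pi) = (u t::real)" shows "u (t + 2*pi*real n) = u t"
proof (induction n)
  case (Suc n)
  have "t + 2*pi*real (Suc n) = (t + 2*pi*real n) + 2*pi" by (simp add: distrib_left)
  thus ?case using assms Suc by metis
qed simp

lemma per_int: assumes "\<forall>t. u (t + 2*pi) = (u t::real)" shows "u (t + 2*pi*real_of_int n) = u t"
proof (cases "n \<ge> 0")
  case True 
  have "u (t + 2*pi*real (nat n)) = u t" by (rule per_nat[OF assms])
  thus ?thesis using True by simp
next
  case False
  have "u (t + 2*pi*real_of_int n + 2*pi*real (nat (-n))) = u (t + 2*pi*real_of_int n)" by (rule per_nat[OF assms])
  thus ?thesis using False by simp
qed
lemma per_red: assumes "\<forall>t. u (t + 2*pi) = (u t::real)"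
  shows "\<exists>y\<in>{0..2*pi}. u x = u y"
proof -
  define n where "n = \<lfloor>x/(2*pi)\<rfloor>"
  define y where "y = x - 2*pi*real_of_int n"
  have "real_of_int n \<le> x/(2*pi)" "x/(2*pi) < real_of_int n + 1" unfolding n_def by linarith+
  hence "2*pi*real_of_int n \<le> x" "x < 2*pi*real_of_int n + 2*pi"
    by (simp_all add: field_simps)
  hence "y \<in> {0..2*pi}" unfolding y_def by auto
  moreover have "u x = u y" using per_int[OF assms, of y n] unfolding y_def by simp
  ultimately show ?thesis by blast
qed

lemma per_bound: assumes "\<forall>t. u (t + 2*pi) = (u t::real)" "continuous_on UNIV u"
  shows "\<exists>M. \<forall>x. \<bar>u x\<bar> \<le> M"
proof -
  have "compact (u ` {0..2*pi})" by (rule compact_continuous_image) (use assms(2) continuous_on_subset in auto)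
  then obtain M where M: "\<forall>y\<in>u ` {0..2*pi}. norm y \<le> M" using compact_imp_bounded bounded_iff by metis
  show ?thesis
  proof (intro exI allI)
    fix x obtain y where "y\<in>{0..2*pi}" "u x = u y" using per_red[OF assms(1)] by blast
    thus "\<bar>u x\<bar> \<le> M" using M by auto
  qed
qed

lemma per_shift_int: assumes "\<forall>t. u (t + 2*pi) = (u t::real)" "continuous_on UNIV u"
  shows "integral {0..2*pi} (\<lambda>t. u (t + h)) = integral {0..2*pi} u"
proof -
  define n where "n = \<lfloor>h/(2*pi)\<rfloor>"
  define h' where "h' = h - 2*pi*real_of_int n"
  have "real_of_int n \<le> h/(2*pi)" "h/(2*pi) < real_of_int n + 1" unfolding n_def by linarith+
  hence "2*pi*real_of_int n \<le> h" "h < 2*pi*real_of_int n + 2*pi"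
    by (simp_all add: field_simps)
  hence h': "0 \<le> h'" "h' \<le> 2*pi" unfolding h'_def by auto
  have eq: "(\<lambda>t. u (t + h)) = (\<lambda>t. u (t + h'))"
  proof
    fix t show "u (t + h) = u (t + h')" using per_int[OF assms(1), of "t+h'" n] unfolding h'_def by simp
  qed
  have int: "u integrable_on {a..b}" for a b
    using assms(2) by (intro integrable_continuous_interval) (auto intro: continuous_on_subset)
  have e1: "integral {0..2*pi} (\<lambda>t. u (t + h')) = integral {h'..2*pi+h'} u"
    using integral_shift_Icc_real[of 0 "2*pi" u h'] by (simp add: o_def add.commute)
  have "h' \<le> 2*pi" "2*pi \<le> 2*pi+h'" using h' by auto
  note e2 = Henstock_Kurzweil_Integration.integral_combine[OF this int]
  have e3: "integral {2*pi..2*pi+h'} u = integral {0..h'} (\<lambda>t. u (t + 2*pi))"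
    using integral_shift_Icc_real[of 0 h' u "2*pi"] by (simp add: o_def add.commute)
  have e4: "integral {0..h'} (\<lambda>t. u (t + 2*pi)) = integral {0..h'} u" using assms(1) by simp
  have "0 \<le> h'" "h' \<le> 2*pi" using h' by auto
  note e5 = Henstock_Kurzweil_Integration.integral_combine[OF this int]
  show ?thesis unfolding eq e1 e2[symmetric] e3 e4 e5[symmetric] by (rule add.commute)
qed

lemma sdiff:
  fixes u u' :: "real \<Rightarrow> real"
  assumes der: "\<And>x. (u has_real_derivative u' x) (at x)"
    and hol: "\<forall>x\<in>{a..b}. \<forall>y\<in>{a..b}. \<bar>u' x - u' y\<bar> \<le> C * \<bar>x - y\<bar> powr \<beta>"
    and C: "0 \<le> C" and \<beta>: "0 \<le> \<beta>" and h: "0 < h" and ab: "a \<le> t - h" "t + h \<le> b"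
  shows "\<bar>2 * u t - u (t + h) - u (t - h)\<bar> \<le> C * 2 powr \<beta> * h powr (1 + \<beta>)"
proof -
  obtain z1 where z1: "t < z1" "z1 < t + h" "u (t+h) - u t = (t + h - t) * u' z1"
    using MVT2[of t "t+h" u u'] der h by auto
  obtain z2 where z2: "t - h < z2" "z2 < t" "u t - u (t-h) = (t - (t - h)) * u' z2"
    using MVT2[of "t-h" t u u'] der h by auto
  have zz: "z1 \<in> {a..b}" "z2 \<in> {a..b}" using z1 z2 ab by auto
  have "2 * u t - u (t + h) - u (t - h) = h * (u' z2 - u' z1)" using z1 z2 by (simp add: algebra_simps)
  hence "\<bar>2 * u t - u (t + h) - u (t - h)\<bar> = h * \<bar>u' z2 - u' z1\<bar>" using h by (simp add: abs_mult)
  also have "\<bar>u' z2 - u' z1\<bar> \<le> C * \<bar>z2 - z1\<bar> powr \<beta>" using hol zz by blast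
  also have "\<bar>z2 - z1\<bar> powr \<beta> \<le> (2*h) powr \<beta>" using z1 z2 \<beta> by (intro powr_mono2) auto
  also have "(2*h) powr \<beta> = 2 powr \<beta> * h powr \<beta>" by (simp add: powr_mult)
  finally have "\<bar>2 * u t - u (t + h) - u (t - h)\<bar> \<le> h * (C * (2 powr \<beta> * h powr \<beta>))"
    using h C by (simp add: mult_left_mono)
  also have "\<dots> = C * 2 powr \<beta> * (h powr 1 * h powr \<beta>)" using h by simp
  also have "h powr 1 * h powr \<beta> = h powr (1 + \<beta>)" by (simp add: powr_add)
  finally show ?thesis .
qed

lemma u_reg:
  fixes u :: "real \<Rightarrow> real"
  assumes Ch: "C_hoelder (2 * s + \<alpha>) u" and s: "1/2<s" "s<1" and \<alpha>: "0<\<alpha>" "\<alpha><1"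
  shows "(\<forall>x. (u has_real_derivative deriv u x) (at x))"
    "\<exists>\<beta> C. 2 * s - 1 < \<beta> \<and> \<beta> \<le> 1 \<and> 0 \<le> C \<and>
        (\<forall>x\<in>{a..b}. \<forall>y\<in>{a..b}. \<bar>deriv u x - deriv u y\<bar> \<le> C * \<bar>x-y\<bar> powr \<beta>)"
proof -
  define r where "r = 2 * s + \<alpha>"
  have r: "1 < r" "r < 3" using s \<alpha> unfolding r_def by auto
  have cr: "\<lceil>r\<rceil> = 2 \<or> \<lceil>r\<rceil> = 3"
  proof -
    have "2 \<le> \<lceil>r\<rceil>" using r by (simp add: le_ceiling_iff)
    moreover have "\<lceil>r\<rceil> \<le> 3" using r by (simp add: ceiling_le_iff)
    ultimately show ?thesis by linarith
  qed
  define k where "k = nat (\<lceil>r\<rceil> - 1)"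
  have Ck: "(\<forall>j<k. \<forall>x. ((deriv ^^ j) u has_real_derivative (deriv ^^ Suc j) u x) (at x))"
     "hoelder_on (r - real k) UNIV ((deriv ^^ k) u)"
    using Ch unfolding C_hoelder_def r_def[symmetric] k_def Let_def by auto
  have k1: "1 \<le> k" using cr unfolding k_def by auto
  have "\<forall>x. ((deriv ^^ 0) u has_real_derivative (deriv ^^ Suc 0) u x) (at x)" using Ck(1) k1 by auto
  thus D: "\<forall>x. (u has_real_derivative deriv u x) (at x)" by simp
  show "\<exists>\<beta> C. 2 * s - 1 < \<beta> \<and> \<beta> \<le> 1 \<and> 0 \<le> C \<and>
        (\<forall>x\<in>{a..b}. \<forall>y\<in>{a..b}. \<bar>deriv u x - deriv u y\<bar> \<le> C * \<bar>x-y\<bar> powr \<beta>)"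
  proof (cases "\<lceil>r\<rceil> = 2")
    case True
    hence k: "k = 1" unfolding k_def by simp
    have "r \<le> 2" using True by (metis ceiling_le_iff of_int_numeral order_refl)
    have "hoelder_on (r - 1) UNIV (deriv u)" using Ck(2) unfolding k by simp
    then obtain C where
      C: "\<forall>x\<in>{a..b}. \<forall>y\<in>{a..b}. \<bar>deriv u x - deriv u y\<bar> \<le> C * \<bar>x-y\<bar> powr (r - 1)"
      unfolding hoelder_on_def by (metis compact_Icc subset_UNIV)
    show ?thesis
    proof (intro exI conjI)
      show "2 * s - 1 < r - 1" "r - 1 \<le> 1" using \<open>r \<le> 2\<close> \<alpha> unfolding r_def by auto
      show "0 \<le> max C 0" by simp
      show "\<forall>x\<in>{a..b}. \<forall>y\<in>{a..b}. \<bar>deriv u x - deriv u y\<bar> \<le> max C 0 * \<bar>x-y\<bar> powr (r - 1)"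
      proof (intro ballI)
        fix x y assume xy: "x\<in>{a..b}" "y\<in>{a..b}"
        have "C * \<bar>x-y\<bar> powr (r - 1) \<le> max C 0 * \<bar>x-y\<bar> powr (r - 1)"
          by (intro mult_right_mono) auto
        thus "\<bar>deriv u x - deriv u y\<bar> \<le> max C 0 * \<bar>x-y\<bar> powr (r - 1)" using C xy by fastforce
      qed
    qed
  next
    case False
    hence k: "k = 2" using cr unfolding k_def by simp
    have "\<forall>x. ((deriv ^^ Suc 0) u has_real_derivative (deriv ^^ Suc (Suc 0)) u x) (at x)"
      using Ck(1) unfolding k by (metis lessI less_2_cases_iff numeral_2_eq_2) 
    hence D2: "\<forall>x. (deriv u has_real_derivative deriv (deriv u) x) (at x)" by simp
    from Ck(2)[unfolded k hoelder_on_def] obtain C where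
      C: "\<forall>x\<in>{a..b}. \<forall>y\<in>{a..b}. \<bar>(deriv ^^ 2) u x - (deriv ^^ 2) u y\<bar> \<le> C * \<bar>x-y\<bar> powr (r - 2)"
      by (metis compact_Icc subset_UNIV of_nat_numeral)
    have dd: "(deriv ^^ 2) u = deriv (deriv u)" by (simp add: numeral_2_eq_2)
    have r2: "0 \<le> r - 2" using False cr r by (metis ceiling_le_iff diff_ge_0_iff_ge le_less not_le of_int_numeral numeral_le_iff semiring_norm(69) semiring_norm(72) le_ceiling_iff)
    define B where "B = \<bar>deriv (deriv u) a\<bar> + \<bar>C\<bar> * \<bar>b - a\<bar> powr (r - 2)"
    have Bb: "\<bar>deriv (deriv u) z\<bar> \<le> B" if z: "z \<in> {a..b}" for z
    proof -
      have az: "a \<in> {a..b}" using z by auto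
      have "\<bar>deriv (deriv u) z - deriv (deriv u) a\<bar> \<le> C * \<bar>z-a\<bar> powr (r - 2)" using C z az unfolding dd by blast
      also have "\<dots> \<le> \<bar>C\<bar> * \<bar>z-a\<bar> powr (r - 2)" by (intro mult_right_mono) auto
      also have "\<dots> \<le> \<bar>C\<bar> * \<bar>b-a\<bar> powr (r - 2)" using z r2 by (intro mult_left_mono powr_mono2) auto
      finally show ?thesis unfolding B_def by linarith
    qed
    have B0: "0 \<le> B" unfolding B_def by simp
    show ?thesis
    proof (intro exI conjI)
      show "2 * s - 1 < 1" "(1::real) \<le> 1" "0 \<le> B" using s B0 by auto
      show "\<forall>x\<in>{a..b}. \<forall>y\<in>{a..b}. \<bar>deriv u x - deriv u y\<bar> \<le> B * \<bar>x-y\<bar> powr 1"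
      proof (intro ballI)
        fix x y assume xy: "x\<in>{a..b}" "y\<in>{a..b}"
        have main: "\<bar>deriv u q - deriv u p\<bar> \<le> B * \<bar>q-p\<bar>" if "p\<in>{a..b}" "q\<in>{a..b}" "p < q" for p q
        proof -
          obtain z where z: "p < z" "z < q" "deriv u q - deriv u p = (q - p) * deriv (deriv u) z"
            using MVT2[of p q "deriv u" "deriv (deriv u)"] D2 \<open>p<q\<close> by blast
          have "z \<in> {a..b}" using z that by auto
          hence "\<bar>deriv (deriv u) z\<bar> \<le> B" by (rule Bb)
          thus ?thesis using z \<open>p<q\<close> by (simp add: abs_mult mult.commute mult_left_mono)
        qed
        show "\<bar>deriv u x - deriv u y\<bar> \<le> B * \<bar>x-y\<bar> powr 1"
        proof (cases x y rule: linorder_cases)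
          case less thus ?thesis using main[OF xy(1) xy(2)] by (simp add: abs_minus_commute)
        next
          case greater thus ?thesis using main[OF xy(2) xy(1)] by (simp add: abs_minus_commute)
        qed simp
      qed
    qed
  qed
qed

lemma cont_aux: fixes u :: "real \<Rightarrow> real"
  assumes cont: "continuous_on UNIV u" and e: "0 < \<epsilon>" and f: "continuous_on {\<epsilon>..} f"
  shows "continuous_on {\<epsilon>..} (\<lambda>h. (u t - u (f h)) / h powr p)"
proof -
  have "continuous_on {\<epsilon>..} (\<lambda>h. u (f h))" using continuous_on_compose2[OF cont f] by auto
  moreover have "continuous_on {\<epsilon>..} (\<lambda>h. h powr p)" using e by (intro continuous_intros) auto
  ultimately show ?thesis using e by (intro continuous_intros) auto
qed

lemma pv_rep:
  fixes u :: "real \<Rightarrow> real"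
  assumes cont: "continuous_on UNIV u" and bnd: "\<forall>x. \<bar>u x\<bar> \<le> M" and s: "0 < s" and \<epsilon>: "0 < \<epsilon>"
  shows "(\<lambda>h. (2 * u t - u (t+h) - u (t-h)) * h powr (-(1 + 2 * s))) absolutely_integrable_on {\<epsilon>..}"
    "pv_trunc s u t \<epsilon> = integral {\<epsilon>..} (\<lambda>h. (2 * u t - u (t+h) - u (t-h)) * h powr (-(1 + 2 * s)))"
proof -
  define p where "p = 1 + 2 * s"
  have p: "1 < p" using s unfolding p_def by simp
  define G where "G z = (u t - u z) / \<bar>t - z\<bar> powr p" for z
  define W where "W h = 2 * M * h powr (-p)" for h
  have "(\<lambda>x. x powr -p) integrable_on {\<epsilon>..}"
    using has_integral_powr_to_inf[of "-p" \<epsilon>] p \<epsilon> by (auto simp: integrable_on_def)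
  from integrable_on_mult_right[OF this, of "2*M"]
  have Wint: "W integrable_on {\<epsilon>..}" unfolding W_def by (simp add: mult.assoc)
  have S: "{\<epsilon>..} \<in> sets lebesgue" by simp
  have A1c: "continuous_on {\<epsilon>..} (\<lambda>h. G (t + h))"
  proof -
    have "continuous_on {\<epsilon>..} (\<lambda>h. (u t - u (t+h)) / h powr p)"
      by (rule cont_aux[OF cont \<epsilon>]) (intro continuous_intros)
    moreover have "\<And>h. h \<in> {\<epsilon>..} \<Longrightarrow> (u t - u (t+h)) / h powr p = G (t+h)"
      unfolding G_def using \<epsilon> by simp
    ultimately show ?thesis by (rule continuous_on_eq)
  qed
  have A2c: "continuous_on {\<epsilon>..} (\<lambda>h. G (t - h))"
  proof -
    have "continuous_on {\<epsilon>..} (\<lambda>h. (u t - u (t-h)) / h powr p)"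
      by (rule cont_aux[OF cont \<epsilon>]) (intro continuous_intros)
    moreover have "\<And>h. h \<in> {\<epsilon>..} \<Longrightarrow> (u t - u (t-h)) / h powr p = G (t-h)"
      unfolding G_def using \<epsilon> by simp
    ultimately show ?thesis by (rule continuous_on_eq)
  qed
  have Gb: "norm (G z) \<le> W \<bar>t - z\<bar>" if "z \<noteq> t" for z
  proof -
    have "\<bar>u t - u z\<bar> \<le> 2 * M" using bnd[rule_format, of t] bnd[rule_format, of z] by linarith
    hence "\<bar>u t - u z\<bar> / \<bar>t - z\<bar> powr p \<le> 2 * M / \<bar>t - z\<bar> powr p"
      using that by (intro divide_right_mono) auto
    thus ?thesis unfolding G_def W_def using that by (simp add: powr_minus_divide abs_divide)
  qed
  have Gb1: "norm (G (t + x)) \<le> W x" if "x \<in> {\<epsilon>..}" for x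
    using Gb[of "t+x"] that \<epsilon> by simp
  have Gb2: "norm (G (t - x)) \<le> W x" if "x \<in> {\<epsilon>..}" for x
    using Gb[of "t-x"] that \<epsilon> by simp
  have A1i: "(\<lambda>h. G (t + h)) absolutely_integrable_on {\<epsilon>..}"
    by (rule measurable_bounded_by_integrable_imp_absolutely_integrable[OF continuous_imp_measurable_on_sets_lebesgue[OF A1c S] S Wint])
       (rule Gb1)
  have A2i: "(\<lambda>h. G (t - h)) absolutely_integrable_on {\<epsilon>..}"
    by (rule measurable_bounded_by_integrable_imp_absolutely_integrable[OF continuous_imp_measurable_on_sets_lebesgue[OF A2c S] S Wint])
       (rule Gb2)
  have d1: "((\<lambda>h. t + h) has_real_derivative 1) (at x within {\<epsilon>..})" if "x \<in> {\<epsilon>..}" for x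
    by (auto intro!: derivative_eq_intros)
  have d2: "((\<lambda>h. t - h) has_real_derivative -1) (at x within {\<epsilon>..})" if "x \<in> {\<epsilon>..}" for x
    by (auto intro!: derivative_eq_intros)
  have inj1: "inj_on (\<lambda>h. t + h) {\<epsilon>..}" by (simp add: inj_on_def)
  have inj2: "inj_on (\<lambda>h. t - h) {\<epsilon>..}" by (simp add: inj_on_def)
  have cv1: "G absolutely_integrable_on ((\<lambda>h. t + h) ` {\<epsilon>..}) \<and> integral ((\<lambda>h. t + h) ` {\<epsilon>..}) G = integral {\<epsilon>..} (\<lambda>h. G (t + h))"
  proof (rule has_absolute_integral_change_of_variables_1'[OF S, THEN iffD1])
    show "\<And>x. x \<in> {\<epsilon>..} \<Longrightarrow> ((\<lambda>h. t + h) has_real_derivative 1) (at x within {\<epsilon>..})" by (rule d1)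
    show "inj_on (\<lambda>h. t + h) {\<epsilon>..}" by (rule inj1)
    show "(\<lambda>x. \<bar>1\<bar> * G (t + x)) absolutely_integrable_on {\<epsilon>..} \<and> integral {\<epsilon>..} (\<lambda>x. \<bar>1\<bar> * G (t + x)) = integral {\<epsilon>..} (\<lambda>h. G (t + h))"
      using A1i by simp
  qed
  have cv2: "G absolutely_integrable_on ((\<lambda>h. t - h) ` {\<epsilon>..}) \<and> integral ((\<lambda>h. t - h) ` {\<epsilon>..}) G = integral {\<epsilon>..} (\<lambda>h. G (t - h))"
  proof (rule has_absolute_integral_change_of_variables_1'[OF S, THEN iffD1])
    show "\<And>x. x \<in> {\<epsilon>..} \<Longrightarrow> ((\<lambda>h. t - h) has_real_derivative -1) (at x within {\<epsilon>..})" by (rule d2)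
    show "inj_on (\<lambda>h. t - h) {\<epsilon>..}" by (rule inj2)
    show "(\<lambda>x. \<bar>-1\<bar> * G (t - x)) absolutely_integrable_on {\<epsilon>..} \<and> integral {\<epsilon>..} (\<lambda>x. \<bar>-1\<bar> * G (t - x)) = integral {\<epsilon>..} (\<lambda>h. G (t - h))"
      using A2i by simp
  qed
  have im1: "(\<lambda>h. t + h) ` {\<epsilon>..} = {t+\<epsilon>..}"
    using image_add_atLeast[of t \<epsilon>] by simp
  have im2: "(\<lambda>h. t - h) ` {\<epsilon>..} = {..t-\<epsilon>}"
  proof -
    have "(\<lambda>h. t - h) ` {\<epsilon>..} = (\<lambda>h. t + h) ` (uminus ` {\<epsilon>..})" by (auto simp: image_image)
    also have "\<dots> = {..t-\<epsilon>}" by (simp add: image_uminus_atLeast image_add_atMost)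
    finally show ?thesis .
  qed
  have h1: "(G has_integral integral {\<epsilon>..} (\<lambda>h. G (t + h))) {t+\<epsilon>..}"
    using cv1 unfolding im1 using set_lebesgue_integral_eq_integral(1) has_integral_integral by (metis absolutely_integrable_on_def)
  have h2: "(G has_integral integral {\<epsilon>..} (\<lambda>h. G (t - h))) {..t-\<epsilon>}"
    using cv2 unfolding im2 by (metis absolutely_integrable_on_def has_integral_integral)
  have "(G has_integral (integral {\<epsilon>..} (\<lambda>h. G (t - h)) + integral {\<epsilon>..} (\<lambda>h. G (t + h)))) ({..t-\<epsilon>} \<union> {t+\<epsilon>..})"
  proof (rule has_integral_Un[OF h2 h1])
    have "{..t-\<epsilon>} \<inter> {t+\<epsilon>..} = {}" using \<epsilon> by auto
    thus "negligible ({..t-\<epsilon>} \<inter> {t+\<epsilon>..})" by simp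
  qed
  moreover have "{..t-\<epsilon>} \<union> {t+\<epsilon>..} = {z. \<epsilon> \<le> \<bar>t - z\<bar>}" by auto
  ultimately have hG: "(G has_integral (integral {\<epsilon>..} (\<lambda>h. G (t - h)) + integral {\<epsilon>..} (\<lambda>h. G (t + h)))) {z. \<epsilon> \<le> \<bar>t - z\<bar>}" by simp
  have Feq: "(2 * u t - u (t+h) - u (t-h)) * h powr (-p) = G (t+h) + G (t-h)" if "h \<in> {\<epsilon>..}" for h
    using that \<epsilon> unfolding G_def by (simp add: powr_minus_divide field_simps)
  have "(\<lambda>h. G (t+h) + G (t-h)) absolutely_integrable_on {\<epsilon>..}"
    using A1i A2i by (rule set_integral_add(1))
  thus "(\<lambda>h. (2 * u t - u (t+h) - u (t-h)) * h powr (-(1 + 2 * s))) absolutely_integrable_on {\<epsilon>..}"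
    unfolding p_def[symmetric] using Feq by (rule absolutely_integrable_spike[OF _ negligible_empty]) auto
  have "integral {\<epsilon>..} (\<lambda>h. (2 * u t - u (t+h) - u (t-h)) * h powr (-p)) = integral {\<epsilon>..} (\<lambda>h. G (t+h) + G (t-h))"
    using Feq by (rule integral_cong)
  also have "\<dots> = integral {\<epsilon>..} (\<lambda>h. G (t+h)) + integral {\<epsilon>..} (\<lambda>h. G (t-h))"
    using A1i A2i by (intro integral_add) (auto dest: set_lebesgue_integral_eq_integral(1))
  finally show "pv_trunc s u t \<epsilon> = integral {\<epsilon>..} (\<lambda>h. (2 * u t - u (t+h) - u (t-h)) * h powr (-(1 + 2 * s)))"
    unfolding pv_trunc_def p_def[symmetric] G_def[symmetric] using integral_unique[OF hG] by simp
qed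

lemma pbound:
  fixes D :: "real \<Rightarrow> real"
  assumes p: "1 < p" and \<beta>: "p - 2 < \<beta>" and K: "0 \<le> K"
    and DM: "\<And>h. \<bar>D h\<bar> \<le> M"
    and DK: "\<And>h. 0 < h \<Longrightarrow> h \<le> 1 \<Longrightarrow> \<bar>D h\<bar> \<le> K * h powr (1 + \<beta>)"
    and Fi: "(\<lambda>h. D h * h powr (-p)) absolutely_integrable_on {\<epsilon>..}"
    and \<epsilon>: "0 < \<epsilon>" "\<epsilon> \<le> 1"
  shows "\<bar>integral {\<epsilon>..} (\<lambda>h. D h * h powr (-p))\<bar> \<le> K / (2 + \<beta> - p) + M / (p - 1)"
proof -
  define F where "F h = D h * h powr (-p)" for h
  have Fi1: "F integrable_on {\<epsilon>..1}"
    using Fi unfolding F_def by (intro integrable_on_subinterval[of _ "{\<epsilon>..}"]) (auto dest: set_lebesgue_integral_eq_integral(1))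
  have Fa2: "F absolutely_integrable_on {1..}"
    using Fi unfolding F_def by (rule set_integrable_subset) (use \<epsilon> in auto)
  hence Fi2: "F integrable_on {1..}" by (auto dest: set_lebesgue_integral_eq_integral(1))
  have "(F has_integral (integral {\<epsilon>..1} F + integral {1..} F)) ({\<epsilon>..1} \<union> {1..})"
  proof (rule has_integral_Un)
    show "(F has_integral integral {\<epsilon>..1} F) {\<epsilon>..1}" using Fi1 by (rule integrable_integral)
    show "(F has_integral integral {1..} F) {1..}" using Fi2 by (rule integrable_integral)
    have "{\<epsilon>..1} \<inter> {1..} = {1::real}" using \<epsilon> by auto
    thus "negligible ({\<epsilon>..1} \<inter> {1::real..})" by simp
  qed
  moreover have "{\<epsilon>..1} \<union> {1..} = {\<epsilon>..}" using \<epsilon> by auto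
  ultimately have split: "integral {\<epsilon>..} F = integral {\<epsilon>..1} F + integral {1..} F"
    by (metis integral_unique)
  define a where "a = 1 + \<beta> - p"
  have a: "-1 < a" using \<beta> unfolding a_def by simp
  have b1: "\<bar>integral {\<epsilon>..1} F\<bar> \<le> K / (2 + \<beta> - p)"
  proof -
    have gi: "(\<lambda>h. K * h powr a) integrable_on {\<epsilon>..1}"
      using \<epsilon> by (intro integrable_continuous_interval continuous_intros) auto
    have "norm (integral {\<epsilon>..1} F) \<le> integral {\<epsilon>..1} (\<lambda>h. K * h powr a)"
    proof (rule Henstock_Kurzweil_Integration.integral_norm_bound_integral[OF Fi1 gi])
      fix h assume h: "h \<in> {\<epsilon>..1}"
      hence h0: "0 < h" using \<epsilon> by auto
      have "norm (F h) = \<bar>D h\<bar> * h powr (-p)" unfolding F_def by (simp add: abs_mult)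
      also have "\<dots> \<le> K * h powr (1 + \<beta>) * h powr (-p)"
        using DK[of h] h h0 by (intro mult_right_mono) auto
      also have "\<dots> = K * h powr a" unfolding a_def using h0 by (simp add: powr_add[symmetric] mult.assoc)
      finally show "norm (F h) \<le> K * h powr a" .
    qed
    also have "\<dots> \<le> integral {0..1} (\<lambda>h. K * h powr a)"
    proof (rule integral_subset_le)
      show "{\<epsilon>..1} \<subseteq> {0..1::real}" using \<epsilon> by auto
      show "(\<lambda>h. K * h powr a) integrable_on {0..1}"
        using integrable_on_powr_from_0[OF a, of 1] by (intro integrable_on_mult_right) auto
    qed (use gi K in auto)
    also have "integral {0..1} (\<lambda>h. K * h powr a) = K * (1 / (a + 1))"
      using has_integral_powr_from_0[OF a, of 1] by (simp add: integral_mult_right integral_unique)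
    also have "\<dots> = K / (2 + \<beta> - p)" unfolding a_def by simp
    finally show ?thesis by simp
  qed
  have b2: "\<bar>integral {1..} F\<bar> \<le> M / (p - 1)"
  proof -
    have hi: "((\<lambda>h. h powr (-p)) has_integral 1 / (p - 1)) {1..}"
    proof -
      have "- (1 / (1 - p)) = 1 / (p - 1)" using p by (simp add: field_simps)
      thus ?thesis using has_integral_powr_to_inf[of "-p" 1] p by simp
    qed
    hence gi: "((\<lambda>h. M * h powr (-p)) has_integral M * (1 / (p - 1))) {1..}"
      by (rule has_integral_mult_right)
    have "norm (integral {1..} F) \<le> integral {1..} (\<lambda>h. M * h powr (-p))"
    proof (rule Henstock_Kurzweil_Integration.integral_norm_bound_integral[OF Fi2])
      show "(\<lambda>h. M * h powr (-p)) integrable_on {1..}" using gi by blast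
      fix h assume h: "h \<in> {1::real..}"
      have "norm (F h) = \<bar>D h\<bar> * h powr (-p)" unfolding F_def by (simp add: abs_mult)
      also have "\<dots> \<le> M * h powr (-p)" using DM[of h] by (intro mult_right_mono) auto
      finally show "norm (F h) \<le> M * h powr (-p)" .
    qed
    also have "\<dots> = M / (p - 1)" using integral_unique[OF gi] by simp
    finally show ?thesis by simp
  qed
  show ?thesis using split b1 b2 unfolding F_def[symmetric] by linarith
qed

lemma split_inf:
  fixes f :: "real \<Rightarrow> real"
  assumes fi: "f absolutely_integrable_on {a..}" and ab: "a \<le> b"
  shows "integral {a..} f = integral {a..b} f + integral {b..} f" "f absolutely_integrable_on {b..}"
    "f integrable_on {b..}" "f integrable_on {a..b}"
proof -
  show fi1: "f integrable_on {a..b}"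
    using fi by (intro integrable_on_subinterval[of _ "{a..}"]) (auto dest: set_lebesgue_integral_eq_integral(1))
  show Fa2: "f absolutely_integrable_on {b..}"
    using fi by (rule set_integrable_subset) (use ab in auto)
  thus fi2: "f integrable_on {b..}" by (auto dest: set_lebesgue_integral_eq_integral(1))
  have "(f has_integral (integral {a..b} f + integral {b..} f)) ({a..b} \<union> {b..})"
  proof (rule has_integral_Un)
    show "(f has_integral integral {a..b} f) {a..b}" using fi1 by (rule integrable_integral)
    show "(f has_integral integral {b..} f) {b..}" using fi2 by (rule integrable_integral)
    have "{a..b} \<inter> {b..} = {b}" using ab by auto
    thus "negligible ({a..b} \<inter> {b..})" by simp
  qed
  moreover have "{a..b} \<union> {b..} = {a..}" using ab by auto
  ultimately show "integral {a..} f = integral {a..b} f + integral {b..} f"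
    by (metis integral_unique)
qed

lemma ucont_comp: fixes u :: "real \<Rightarrow> real"
  assumes "continuous_on UNIV u" "continuous_on A g" shows "continuous_on A (\<lambda>x. u (g x))"
  using continuous_on_compose2[OF assms] by auto

lemma P_int_zero:
  fixes u :: "real \<Rightarrow> real"
  assumes cont: "continuous_on UNIV u" and per: "\<forall>t. u (t + 2*pi) = u t"
    and bnd: "\<forall>x. \<bar>u x\<bar> \<le> M" and s: "0 < s" and \<epsilon>: "0 < \<epsilon>"
  shows "((\<lambda>t. integral {\<epsilon>..} (\<lambda>h. (2 * u t - u (t+h) - u (t-h)) * h powr (-(1 + 2 * s)))) has_integral 0) {0..2*pi}"
proof -
  define p where "p = 1 + 2 * s"
  have p: "1 < p" using s unfolding p_def by simp
  define F where "F t h = (2 * u t - u (t+h) - u (t-h)) * h powr (-p)" for t h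
  have Fa: "F t absolutely_integrable_on {\<epsilon>..}" for t
    using pv_rep(1)[OF cont bnd s \<epsilon>, of t] unfolding F_def p_def .
  define N where "N n = \<epsilon> + real n" for n :: nat
  have N: "\<epsilon> \<le> N n" for n unfolding N_def by simp
  define PN where "PN n t = integral {\<epsilon>..N n} (F t)" for n t
  define P where "P t = integral {\<epsilon>..} (F t)" for t
  have M0: "0 \<le> M" using bnd by (metis abs_ge_zero order_trans)
  have tail: "\<bar>P t - PN n t\<bar> \<le> 4 * M * (N n powr (1 - p) / (p - 1))" for t n
  proof -
    have Nn: "0 < N n" using N[of n] \<epsilon> by linarith
    have "P t - PN n t = integral {N n..} (F t)"
      using split_inf(1)[OF Fa[of t] N[of n]] unfolding P_def PN_def by linarith
    have hi: "((\<lambda>h. h powr (-p)) has_integral N n powr (1 - p) / (p - 1)) {N n..}"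
    proof -
      have "- (N n powr (- p + 1)) / (- p + 1) = N n powr (1 - p) / (p - 1)" using p
        by (simp add: field_simps)
      thus ?thesis using has_integral_powr_to_inf[of "-p" "N n"] p Nn by simp
    qed
    hence gi: "((\<lambda>h. (4 * M) * h powr (-p)) has_integral (4 * M) * (N n powr (1 - p) / (p - 1))) {N n..}"
      by (rule has_integral_mult_right)
    have "norm (integral {N n..} (F t)) \<le> integral {N n..} (\<lambda>h. (4 * M) * h powr (-p))"
    proof (rule Henstock_Kurzweil_Integration.integral_norm_bound_integral[OF split_inf(3)[OF Fa[of t] N[of n]]])
      show "(\<lambda>h. (4 * M) * h powr (-p)) integrable_on {N n..}" using gi by blast
      fix h assume h: "h \<in> {N n..}"
      have "\<bar>2 * u t - u (t+h) - u (t-h)\<bar> \<le> 4 * M"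
        using bnd[rule_format, of t] bnd[rule_format, of "t+h"] bnd[rule_format, of "t-h"] by linarith
      hence "\<bar>2 * u t - u (t+h) - u (t-h)\<bar> * h powr (-p) \<le> (4 * M) * h powr (-p)"
        by (intro mult_right_mono) auto
      thus "norm (F t h) \<le> (4 * M) * h powr (-p)" unfolding F_def by (simp add: abs_mult)
    qed
    also have "\<dots> = 4 * M * (N n powr (1 - p) / (p - 1))" using integral_unique[OF gi] by simp
    finally show ?thesis using \<open>P t - PN n t = integral {N n..} (F t)\<close> by simp
  qed
  have tl0: "((\<lambda>n. 4 * M * (N n powr (1 - p) / (p - 1))) \<longlongrightarrow> 0) sequentially"
  proof -
    have "filterlim N at_top sequentially" unfolding N_def
      by (rule filterlim_tendsto_add_at_top[OF tendsto_const filterlim_real_sequentially])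
    hence "((\<lambda>n. N n powr (1 - p)) \<longlongrightarrow> 0) sequentially" using p by (intro tendsto_neg_powr) auto
    hence "((\<lambda>n. 4 * M * (N n powr (1 - p) / (p - 1))) \<longlongrightarrow> 4 * M * (0 / (p - 1))) sequentially"
      using p by (intro tendsto_intros) auto
    thus ?thesis by simp
  qed
  have ul: "uniform_limit {0..2*pi} PN P sequentially"
  proof (rule uniform_limitI)
    fix e :: real assume e: "0 < e"
    have "\<forall>\<^sub>F n in sequentially. 4 * M * (N n powr (1 - p) / (p - 1)) < e"
      using order_tendstoD(2)[OF tl0 e] .
    thus "\<forall>\<^sub>F n in sequentially. \<forall>x\<in>{0..2*pi}. dist (PN n x) (P x) < e"
    proof (rule eventually_mono)
      fix n assume n: "4 * M * (N n powr (1 - p) / (p - 1)) < e"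
      show "\<forall>x\<in>{0..2*pi}. dist (PN n x) (P x) < e"
      proof
        fix x show "dist (PN n x) (P x) < e" using tail[of x n] n by (simp add: dist_real_def abs_minus_commute)
      qed
    qed
  qed
  have Fc: "continuous_on ({0..2*pi} \<times> {\<epsilon>..N n}) (\<lambda>(t, h). F t h)" for n
  proof -
    have "continuous_on ({0..2*pi} \<times> {\<epsilon>..N n}) (\<lambda>z. (2 * u (fst z) - u (fst z + snd z) - u (fst z - snd z)) * snd z powr (-p))"
      by (intro continuous_intros ucont_comp[OF cont]) (use \<epsilon> in auto)
    thus ?thesis unfolding F_def by (simp add: split_def)
  qed
  have PNc: "continuous_on {0..2*pi} (PN n)" for n
    unfolding PN_def using integral_continuous_on_param[of "{0..2*pi}" \<epsilon> "N n" F] Fc[of n]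
    by (simp add: cbox_interval)
  have inner: "integral {0..2*pi} (\<lambda>t. F t h) = 0" for h
  proof -
    have ic: "continuous_on {0..2*pi} (\<lambda>t. u (t + c))" for c
      by (intro ucont_comp[OF cont] continuous_intros)
    have ii: "(\<lambda>t. u (t + c)) integrable_on {0..2*pi}" for c
      by (rule integrable_continuous_interval[OF ic])
    have iu: "u integrable_on {0..2*pi}" using ii[of 0] by simp
    have "integral {0..2*pi} (\<lambda>t. F t h) = integral {0..2*pi} (\<lambda>t. 2 * u t - u (t+h) - u (t + (-h))) * h powr (-p)"
      unfolding F_def by (simp add: integral_mult_left)
    also have "integral {0..2*pi} (\<lambda>t. 2 * u t - u (t+h) - u (t + (-h))) = 
        2 * integral {0..2*pi} u - integral {0..2*pi} (\<lambda>t. u (t+h)) - integral {0..2*pi} (\<lambda>t. u (t + (-h)))"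
    proof (rule integral_unique)
      have "((\<lambda>t. 2 * u t) has_integral 2 * integral {0..2*pi} u) {0..2*pi}"
        using integrable_integral[OF iu] by (rule has_integral_mult_right)
      from has_integral_diff[OF has_integral_diff[OF this integrable_integral[OF ii[of h]]] integrable_integral[OF ii[of "-h"]]]
      show "((\<lambda>t. 2 * u t - u (t+h) - u (t + (-h))) has_integral 
        2 * integral {0..2*pi} u - integral {0..2*pi} (\<lambda>t. u (t+h)) - integral {0..2*pi} (\<lambda>t. u (t + (-h)))) {0..2*pi}" .
    qed
    also have "\<dots> = 0" using per_shift_int[OF per cont, of h] per_shift_int[OF per cont, of "-h"] by simp
    finally show ?thesis by simp
  qed
  have PNint: "integral {0..2*pi} (PN n) = 0" for n
  proof -
    have "integral {0..2*pi} (PN n) = integral {\<epsilon>..N n} (\<lambda>h. integral {0..2*pi} (\<lambda>t. F t h))"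
    proof -
      have "continuous_on (cbox (0,\<epsilon>) (2*pi, N n)) (\<lambda>(t,h). F t h)"
        unfolding cbox_Pair_eq unfolding cbox_interval by (rule Fc)
      from integral_swap_continuous[OF this] show ?thesis unfolding PN_def cbox_interval .
    qed
    also have "\<dots> = 0" unfolding inner by simp
    finally show ?thesis .
  qed
  obtain I J where IJ: "\<And>n. (PN n has_integral I n) {0..2*pi}" "(P has_integral J) {0..2*pi}" "(I \<longlongrightarrow> J) sequentially"
    using uniform_limit_integral[OF ul PNc] by auto
  have "I n = 0" for n using IJ(1)[of n] PNint[of n] by (simp add: integral_unique)
  hence "I = (\<lambda>_. 0)" by auto
  hence "J = 0" using IJ(3) by (simp add: LIMSEQ_const_iff)
  thus ?thesis using IJ(2) unfolding P_def F_def p_def by simp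
qed

lemma L_int_zero:
  fixes u :: "real \<Rightarrow> real"
  assumes cont: "continuous_on UNIV u" and per: "\<forall>t. u (t + 2*pi) = u t"
    and bnd: "\<forall>x. \<bar>u x\<bar> \<le> M" and s: "1/2 < s" "s < 1"
    and der: "\<And>x. (u has_real_derivative u' x) (at x)"
    and \<beta>: "2 * s - 1 < \<beta>" "\<beta> \<le> 1" and C: "0 \<le> C"
    and hol: "\<forall>x\<in>{-1..2*pi+1}. \<forall>y\<in>{-1..2*pi+1}. \<bar>u' x - u' y\<bar> \<le> C * \<bar>x-y\<bar> powr \<beta>"
    and lim: "\<And>t. (pv_trunc s u t \<longlongrightarrow> L t) (at_right 0)"
  shows "(L has_integral 0) {0..2*pi}"
proof -
  define p where "p = 1 + 2 * s"
  define \<epsilon> where "\<epsilon> n = 1 / (real n + 1)" for n :: nat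
  have \<epsilon>: "0 < \<epsilon> n" "\<epsilon> n \<le> 1" for n unfolding \<epsilon>_def by (auto simp: field_simps)
  have s0: "0 < s" using s by simp
  define f where "f n t = pv_trunc s u t (\<epsilon> n)" for n t
  have feq: "f n t = integral {\<epsilon> n..} (\<lambda>h. (2 * u t - u (t+h) - u (t-h)) * h powr (-(1 + 2 * s)))" for n t
    unfolding f_def by (rule pv_rep(2)[OF cont bnd s0 \<epsilon>(1)])
  have fint: "(f n has_integral 0) {0..2*pi}" for n
    unfolding feq[abs_def] by (rule P_int_zero[OF cont per bnd s0 \<epsilon>(1)])
  define B where "B = C * 2 powr \<beta> / (2 + \<beta> - p) + 4 * M / (p - 1)"
  have fb: "norm (f n t) \<le> B" if t: "t \<in> {0..2*pi}" for n t
  proof -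
    have "\<bar>integral {\<epsilon> n..} (\<lambda>h. (2 * u t - u (t+h) - u (t-h)) * h powr (-p))\<bar> \<le> C * 2 powr \<beta> / (2 + \<beta> - p) + 4 * M / (p - 1)"
    proof (rule pbound)
      show "1 < p" "p - 2 < \<beta>" using s \<beta> unfolding p_def by auto
      show "0 \<le> C * 2 powr \<beta>" using C by simp
      show "\<bar>2 * u t - u (t + h) - u (t - h)\<bar> \<le> 4 * M" for h
        using bnd[rule_format, of t] bnd[rule_format, of "t+h"] bnd[rule_format, of "t-h"] by linarith
      show "\<bar>2 * u t - u (t + h) - u (t - h)\<bar> \<le> C * 2 powr \<beta> * h powr (1 + \<beta>)" if "0 < h" "h \<le> 1" for h
      proof -
        have b0: "0 \<le> \<beta>" using s \<beta> by linarith
        show ?thesis by (rule sdiff[OF der hol C b0 \<open>0 < h\<close>]) (use t that in auto)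
      qed
      show "(\<lambda>h. (2 * u t - u (t+h) - u (t-h)) * h powr (-p)) absolutely_integrable_on {\<epsilon> n..}"
        using pv_rep(1)[OF cont bnd s0 \<epsilon>(1)] unfolding p_def .
    qed (use \<epsilon> in auto)
    thus ?thesis unfolding feq B_def p_def by simp
  qed
  have conv: "(\<lambda>n. f n t) \<longlonglongrightarrow> L t" for t
  proof -
    have "filterlim \<epsilon> (at_right 0) sequentially"
    proof (rule tendsto_imp_filterlim_at_right)
      show "\<epsilon> \<longlonglongrightarrow> 0" unfolding \<epsilon>_def using LIMSEQ_inverse_real_of_nat by (simp add: inverse_eq_divide add.commute)
      show "\<forall>\<^sub>F x in sequentially. 0 < \<epsilon> x" using \<epsilon> by simp
    qed
    from filterlim_compose[OF lim this] show ?thesis unfolding f_def by simp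
  qed
  have DC: "L integrable_on {0..2*pi}" "(\<lambda>n. integral {0..2*pi} (f n)) \<longlonglongrightarrow> integral {0..2*pi} L"
    by (rule dominated_convergence[of f "{0..2*pi}" "\<lambda>_. B" L]; (use fint fb conv in auto)?)+
  have "integral {0..2*pi} (f n) = 0" for n using fint by (simp add: integral_unique)
  hence "integral {0..2*pi} L = 0" using DC(2) by (simp add: LIMSEQ_const_iff)
  thus ?thesis using DC(1) by (metis has_integral_integrable_integral)
qed

theorem lemma4p7:
  fixes s \<alpha> c :: real and e g :: "real \<Rightarrow> real"
  assumes s: "1/2 < s" "s < 1"
    and \<alpha>: "0 < \<alpha>" "\<alpha> < 1"
    and c: "c > 0"
    and e_hoelder: "hoelder_on \<alpha> UNIV e"
    and e_per: "\<forall>t. e (t + 2 * pi) = e t"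
    and e_mean: "(1 / (2 * pi)) * integral {0..2 * pi} e > 0"
    and g_hoelder: "hoelder_on \<alpha> {0<..} g"
    and G1: "Limsup at_top (\<lambda>t. ereal (g t + (1 / (2 * pi)) * integral {0..2 * pi} e)) < 0"
    and G2: "filterlim g at_top (at_right 0)"
      "\<exists>\<delta>>0. mono_on {0<..<\<delta>} g \<or> antimono_on {0<..<\<delta>} g"
  shows "\<exists>R0 R1. 0 < R0 \<and> R0 < R1 \<and>
    (\<forall>lam u. 0 < lam \<and> lam < 1 \<and> (\<forall>t. u t > 0) \<and> (\<forall>t. u (t + 2 * pi) = u t) \<and>
        classical_solution s \<alpha> c lam g e u \<longrightarrow>
        (\<exists>t0\<in>{0..2 * pi}. \<exists>t1\<in>{0..2 * pi}. u t0 > R0 \<and> u t1 < R1))"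
proof -
  define E where "E = integral {0..2 * pi} e"
  define eb where "eb = (1 / (2 * pi)) * E"
  have eb: "0 < eb" using e_mean unfolding eb_def E_def .
  have E0: "0 < E" using eb pi_gt_zero unfolding eb_def by (simp add: zero_less_divide_iff)
  have eint: "(e has_integral E) {0..2*pi}"
  proof -
    have "e integrable_on {0..2*pi}" using E0 not_integrable_integral unfolding E_def by fastforce
    thus ?thesis unfolding E_def by (rule integrable_integral)
  qed
  have "\<forall>\<^sub>F x in at_right 0. 1 \<le> g x" using G2(1) unfolding filterlim_at_top by blast
  then obtain r :: real where r: "0 < r" "\<And>y. 0 < y \<Longrightarrow> y < r \<Longrightarrow> 1 \<le> g y"
    unfolding eventually_at_right_field by auto
  obtain l where l: "Limsup at_top (\<lambda>t. ereal (g t + eb)) < ereal l" "ereal l < 0"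
    using ereal_dense2[OF G1] unfolding eb_def E_def by blast
  have "\<forall>\<^sub>F t in at_top. ereal (g t + eb) < ereal l" by (rule Limsup_lessD[OF l(1)])
  then obtain T where T: "\<And>t. T \<le> t \<Longrightarrow> g t + eb < l"
    unfolding eventually_at_top_linorder by auto
  have l0: "l < 0" using l(2) by simp
  define R0 where "R0 = r / 2"
  define R1 where "R1 = max T (R0 + 1)"
  show ?thesis
  proof (intro exI conjI allI impI)
    show "0 < R0" unfolding R0_def using r by auto
    have "R0 < R0 + 1" by simp
    also have "\<dots> \<le> R1" unfolding R1_def by (rule max.cobounded2)
    finally show "R0 < R1" .
    fix lam and u :: "real \<Rightarrow> real"
    assume H: "0 < lam \<and> lam < 1 \<and> (\<forall>t. u t > 0) \<and> (\<forall>t. u (t + 2 * pi) = u t) \<and> classical_solution s \<alpha> c lam g e u"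
    have lam: "0 < lam" and upos: "\<And>t. u t > 0" and per: "\<forall>t. u (t + 2 * pi) = u t"
      and Ch: "C_hoelder (2 * s + \<alpha>) u"
      and eq: "\<And>t. pv_exists s u t" "\<And>t. - frac_lap s u t + c * deriv u t - lam * g (u t) = lam * e t"
      using H unfolding classical_solution_def by auto
    have der: "\<forall>x. (u has_real_derivative deriv u x) (at x)" by (rule u_reg(1)[OF Ch s \<alpha>])
    have cont: "continuous_on UNIV u"
      using der by (metis DERIV_isCont continuous_at_imp_continuous_on)
    obtain M where bnd: "\<forall>x. \<bar>u x\<bar> \<le> M" using per_bound[OF per cont] by blast
    obtain \<beta> C where \<beta>C: "2 * s - 1 < \<beta>" "\<beta> \<le> 1" "0 \<le> C"
      "\<forall>x\<in>{-1..2*pi+1}. \<forall>y\<in>{-1..2*pi+1}. \<bar>deriv u x - deriv u y\<bar> \<le> C * \<bar>x-y\<bar> powr \<beta>"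
      using u_reg(2)[OF Ch s \<alpha>, of "-1" "2*pi+1"] by blast
    define L where "L t = Lim (at_right 0) (pv_trunc s u t)" for t
    have lim: "(pv_trunc s u t \<longlongrightarrow> L t) (at_right 0)" for t
    proof -
      obtain L' where L': "(pv_trunc s u t \<longlongrightarrow> L') (at_right 0)" using eq(1)[of t] unfolding pv_exists_def by blast
      hence "L t = L'" unfolding L_def by (intro tendsto_Lim) auto
      thus ?thesis using L' by simp
    qed
    have Lint: "(L has_integral 0) {0..2*pi}"
      by (rule L_int_zero[OF cont per bnd s _ \<beta>C lim]) (use der in auto)
    have gu: "g (u t) = (- (C1s s * L t) + c * deriv u t - lam * e t) / lam" for t
    proof -
      have "frac_lap s u t = C1s s * L t" unfolding frac_lap_def L_def ..
      thus ?thesis using eq(2)[of t] lam by (simp add: field_simps)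
    qed
    have dint: "(deriv u has_integral 0) {0..2*pi}"
    proof -
      have "(deriv u has_integral (u (2*pi) - u 0)) {0..2*pi}"
      proof (rule fundamental_theorem_of_calculus)
        fix x assume "x \<in> {0..2*pi}"
        show "(u has_vector_derivative deriv u x) (at x within {0..2*pi})"
          using der by (metis has_real_derivative_iff_has_vector_derivative has_vector_derivative_at_within)
      qed simp
      moreover have "u (2*pi) = u 0" using per[rule_format, of 0] by simp
      ultimately show ?thesis by simp
    qed
    have gint: "((\<lambda>t. g (u t)) has_integral - E) {0..2*pi}"
    proof -
      have h1: "((\<lambda>t. C1s s * L t) has_integral C1s s * 0) {0..2*pi}" by (rule has_integral_mult_right[OF Lint])
      have h2: "((\<lambda>t. c * deriv u t) has_integral c * 0) {0..2*pi}" by (rule has_integral_mult_right[OF dint])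
      have h3: "((\<lambda>t. lam * e t) has_integral lam * E) {0..2*pi}" by (rule has_integral_mult_right[OF eint])
      have "((\<lambda>t. (- (C1s s * L t) + c * deriv u t - lam * e t) / lam) has_integral ((- (C1s s * 0) + c * 0 - lam * E) / lam)) {0..2*pi}"
        by (intro has_integral_divide has_integral_diff has_integral_add has_integral_neg h1 h2 h3)
      moreover have "(- (C1s s * 0) + c * 0 - lam * E) / lam = - E" using lam by simp
      ultimately show ?thesis unfolding gu[symmetric] by simp
    qed
    have t0: "\<exists>t0\<in>{0..2*pi}. u t0 > R0"
    proof (rule ccontr)
      assume "\<not> ?thesis"
      hence le: "\<And>t. t \<in> {0..2*pi} \<Longrightarrow> u t \<le> R0" by force
      have "0 \<le> - E"
      proof (rule has_integral_nonneg[OF gint])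
        fix t assume "t \<in> {0..2*pi}"
        hence "u t < r" using le[of t] r unfolding R0_def by auto
        thus "0 \<le> g (u t)" using r(2)[OF upos[of t]] by simp
      qed
      thus False using E0 by simp
    qed
    have t1: "\<exists>t1\<in>{0..2*pi}. u t1 < R1"
    proof (rule ccontr)
      assume "\<not> ?thesis"
      hence ge: "\<And>t. t \<in> {0..2*pi} \<Longrightarrow> R1 \<le> u t" by force
      have ci: "((\<lambda>_. l - eb) has_integral 2 * pi * (l - eb)) {0..2*pi}"
        using has_integral_const_real[of "l - eb" 0 "2*pi"] by simp
      have "- E \<le> 2 * pi * (l - eb)"
      proof (rule has_integral_le[OF gint ci])
        fix t assume "t \<in> {0..2*pi}"
        hence "T \<le> u t" using ge[of t] unfolding R1_def by auto
        thus "g (u t) \<le> l - eb" using T[of "u t"] by simp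
      qed
      also have "\<dots> = 2 * pi * l - E" unfolding eb_def by (simp add: right_diff_distrib)
      finally have "0 \<le> pi * l" by simp
      moreover have "pi * l < 0" by (rule mult_pos_neg[OF pi_gt_zero l0])
      ultimately show False by simp
    qed
    show "\<exists>t0\<in>{0..2 * pi}. \<exists>t1\<in>{0..2 * pi}. u t0 > R0 \<and> u t1 < R1" using t0 t1 by blast
  qed
qed

end
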